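(* Let $F:\mathbb{R}^N\times\mathbb{R}\times\mathbb{R}^N\times S^N\to\mathbb{R}$ be continuous and uniformly elliptic: there are $0<\lambda\le\Lambda$ with $\lambda\,\mathrm{tr}(Q)\le F(x,t,p,X)-F(x,t,p,X+Q)\le\Lambda\,\mathrm{tr}(Q)$ for all $x,p,t,X$ and all $Q\in S^N$, $Q\ge0$. Let $A$ be a metric space and $b:\mathbb{R}^N\times A\to\mathbb{R}^N$, $c:\mathbb{R}^N\times A\to\mathbb{R}$ continuous, such that for every $R>0$ there is $K_R$ with $\sup_{|x|\le R,\alpha}(|b|+|c|)\le K_R$ and $|b(x,\alpha)-b(y,\alpha)|\le K_R|x-y|$ for $|x|,|y|\le R$; $c\ge0$ and $c$ continuous in $x$ uniformly in $|x|\le R,\alpha$; and for some $R_o>0$, $\sup_\alpha(b(x,\alpha)\cdot x-c(x,\alpha)|x|^2\log|x|)\le\lambda-(N-1)\Lambda$ for $|x|\ge R_o$. Assume $F(x,t,p,0)\le\sup_{\alpha\in A}\{c(x,\alpha)t-b(x,\alpha)\cdot p\}$ for all $x,t,p$. Let $v\in LSC(\mathbb{R}^N)$ be a viscosity supersolution of $F(x,v,Dv,D^2v)=0$ in $\mathbb{R}^N$ with $\liminf_{|x|\to\infty}v(x)/\log|x|\ge0$. If either $c\equiv0$ or $v\le0$, then $v$ is constant.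
   Context: $S^N$ is the space of real symmetric $N\times N$ matrices. *)

theory Defs
  imports "HOL-Analysis.Analysis"
begin

definition symmetric_mat :: "real^'n^'n \<Rightarrow> bool" where
  "symmetric_mat X \<longleftrightarrow> transpose X = X"

definition psd_mat :: "real^'n^'n \<Rightarrow> bool" where
  "psd_mat Q \<longleftrightarrow> (\<forall>\<xi>. 0 \<le> \<xi> \<bullet> (Q *v \<xi>))"

definition lsc :: "(real^'n \<Rightarrow> real) \<Rightarrow> bool" where
  "lsc v \<longleftrightarrow> (\<forall>x. \<forall>e>0. eventually (\<lambda>y. v x - e < v y) (at x))"

definition C2_with :: "(real^'n \<Rightarrow> real) \<Rightarrow> (real^'n \<Rightarrow> real^'n) \<Rightarrow> (real^'n \<Rightarrow> real^'n^'n) \<Rightarrow> bool" where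
  "C2_with phi Dphi Hphi \<longleftrightarrow>
     (\<forall>x. (phi has_derivative (\<lambda>h. Dphi x \<bullet> h)) (at x)) \<and>
     (\<forall>x. (Dphi has_derivative (\<lambda>h. Hphi x *v h)) (at x)) \<and>
     continuous_on UNIV Hphi"

definition visc_supersolution ::
  "(real^'n \<Rightarrow> real \<Rightarrow> real^'n \<Rightarrow> real^'n^'n \<Rightarrow> real) \<Rightarrow> (real^'n \<Rightarrow> real) \<Rightarrow> bool" where
  "visc_supersolution F v \<longleftrightarrow> lsc v \<and>
     (\<forall>phi Dphi Hphi x0. C2_with phi Dphi Hphi \<and>
        (\<exists>r>0. \<forall>y. dist y x0 < r \<longrightarrow> v x0 - phi x0 \<le> v y - phi y)
        \<longrightarrow> F x0 (v x0) (Dphi x0) (Hphi x0) \<ge> 0)"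

end

theory Submission
  imports Defs "HOL-Real_Asymp.Real_Asymp"
begin


lemma lsc_open_nbhd:
  assumes "lsc v" "a < v x"
  shows "\<exists>U. open U \<and> x \<in> U \<and> (\<forall>y\<in>U. a < v y)"
proof -
  have "eventually (\<lambda>y. v x - (v x - a) < v y) (at x)"
    using assms unfolding lsc_def by (metis diff_gt_0_iff_gt)
  then obtain U where U: "open U" "x \<in> U" "\<forall>y\<in>U. y \<noteq> x \<longrightarrow> a < v y"
    unfolding eventually_at_topological by auto
  then show ?thesis using assms(2) by (intro exI[of _ U]) auto
qed

lemma lsc_min:
  assumes "lsc v" "compact K" "K \<noteq> {}"
  shows "\<exists>z\<in>K. \<forall>x\<in>K. v z \<le> v x"
proof (rule ccontr)
  assume "\<not> ?thesis"
  then have "\<forall>x\<in>K. \<exists>y\<in>K. v y < v x" by (auto simp: not_le)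
  then obtain g where g: "\<And>x. x \<in> K \<Longrightarrow> g x \<in> K \<and> v (g x) < v x" by metis
  have "\<forall>x\<in>K. \<exists>U. open U \<and> x \<in> U \<and> (\<forall>y\<in>U. v (g x) < v y)"
    using lsc_open_nbhd[OF assms(1)] g by blast
  then obtain U where U: "\<And>x. x \<in> K \<Longrightarrow> open (U x) \<and> x \<in> U x \<and> (\<forall>y\<in>U x. v (g x) < v y)"
    by metis
  have "K \<subseteq> (\<Union>x\<in>K. U x)" using U by blast
  then obtain T where T: "T \<subseteq> K" "finite T" "K \<subseteq> (\<Union>x\<in>T. U x)"
    using compactE_image[OF assms(2), of K U] U by blast
  have "T \<noteq> {}" using T assms(3) by auto
  then obtain x0 where x0: "x0 \<in> T" "\<forall>x\<in>T. v (g x0) \<le> v (g x)"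
  proof -
    have "Min ((\<lambda>x. v (g x)) ` T) \<in> (\<lambda>x. v (g x)) ` T"
      using T(2) \<open>T \<noteq> {}\<close> by (intro Min_in) auto
    then obtain x0 where "x0 \<in> T" "v (g x0) = Min ((\<lambda>x. v (g x)) ` T)" by auto
    then show ?thesis using that T(2) by auto
  qed
  have "g x0 \<in> K" using g T x0 by auto
  then obtain x1 where "x1 \<in> T" "g x0 \<in> U x1" using T by auto
  then have "v (g x1) < v (g x0)" using U T by auto
  then show False using x0 \<open>x1 \<in> T\<close> by force
qed



definition outer :: "real^'n \<Rightarrow> real^'n \<Rightarrow> real^'n^'n" where
  "outer u w = (\<chi> i j. u$i * w$j)"

lemma outer_mult: "outer u w *v h = (w \<bullet> h) *\<^sub>R u"
  by (simp add: outer_def vec_eq_iff matrix_vector_mult_def inner_vec_def sum_distrib_left sum_distrib_right mult.assoc mult.commute mult.left_commute)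

lemma C2_radial:
  fixes y :: "real^'n"
  assumes d1: "\<And>s. s \<ge> 0 \<Longrightarrow> (G has_real_derivative G1 s) (at s)"
   and d2: "\<And>s. s \<ge> 0 \<Longrightarrow> (G1 has_real_derivative G2 s) (at s)"
   and c2: "continuous_on {0..} G2"
  shows "C2_with (\<lambda>x. G ((x-y)\<bullet>(x-y))) (\<lambda>x. (2 * G1 ((x-y)\<bullet>(x-y))) *\<^sub>R (x-y))
     (\<lambda>x. (2*G1((x-y)\<bullet>(x-y))) *\<^sub>R mat 1 + (4 * G2 ((x-y)\<bullet>(x-y))) *\<^sub>R outer (x-y) (x-y))"
  unfolding C2_with_def
proof (intro conjI allI)
  fix x :: "real^'n"
  let ?q = "(x-y)\<bullet>(x-y)"
  have q0: "?q \<ge> 0" by simp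
  have dq: "((\<lambda>x. (x-y)\<bullet>(x-y)) has_derivative (\<lambda>h. 2 * ((x-y) \<bullet> h))) (at x)"
    by (auto intro!: derivative_eq_intros simp: inner_commute)
  have dG: "(G has_derivative (\<lambda>h. h * G1 ?q)) (at ?q)"
    using d1[OF q0] by (simp add: has_field_derivative_def mult.commute[of _ "G1 _"] mult.commute[of _ "G2 _"])
  have "((\<lambda>x. G ((x-y)\<bullet>(x-y))) has_derivative (\<lambda>h. (2 * ((x-y) \<bullet> h)) * G1 ?q)) (at x)"
    using has_derivative_compose[OF dq dG] by simp
  then show "((\<lambda>x. G ((x-y)\<bullet>(x-y))) has_derivative (\<lambda>h. (2 * G1 ?q) *\<^sub>R (x-y) \<bullet> h)) (at x)"
    by (simp add: algebra_simps)
  have dG1: "(G1 has_derivative (\<lambda>h. h * G2 ?q)) (at ?q)"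
    using d2[OF q0] by (simp add: has_field_derivative_def mult.commute[of _ "G1 _"] mult.commute[of _ "G2 _"])
  have e1: "((\<lambda>x. G1 ((x-y)\<bullet>(x-y))) has_derivative (\<lambda>h. (2 * ((x-y) \<bullet> h)) * G2 ?q)) (at x)"
    using has_derivative_compose[OF dq dG1] by simp
  have "((\<lambda>x. (2 * G1 ((x-y)\<bullet>(x-y))) *\<^sub>R (x-y)) has_derivative
     (\<lambda>h. (2 * G1 ?q) *\<^sub>R h + (2 * ((2 * ((x-y) \<bullet> h)) * G2 ?q)) *\<^sub>R (x-y))) (at x)"
    by (rule derivative_eq_intros e1 | simp)+
  moreover have "(\<lambda>h. ((2*G1 ?q) *\<^sub>R mat 1 + (4 * G2 ?q) *\<^sub>R outer (x-y) (x-y)) *v h)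
     = (\<lambda>h. (2 * G1 ?q) *\<^sub>R h + (2 * ((2 * ((x-y) \<bullet> h)) * G2 ?q)) *\<^sub>R (x-y))"
    by (rule ext) (simp only: matrix_vector_mult_add_rdistrib outer_mult
        scaleR_matrix_vector_assoc[symmetric] matrix_vector_mul_lid scaleR_scaleR, simp add: algebra_simps)
  ultimately show "((\<lambda>x. (2 * G1 ((x-y)\<bullet>(x-y))) *\<^sub>R (x-y)) has_derivative
     (\<lambda>h. ((2*G1 ?q) *\<^sub>R mat 1 + (4 * G2 ?q) *\<^sub>R outer (x-y) (x-y)) *v h)) (at x)"
    by simp
next
  have cq: "continuous_on UNIV (\<lambda>x::real^'n. (x-y)\<bullet>(x-y))" by (intro continuous_intros)
  have cG1: "continuous_on {0..} G1"
    using d2 by (intro continuous_at_imp_continuous_on ballI DERIV_isCont) auto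
  have "continuous_on UNIV (\<lambda>x::real^'n. G1 ((x-y)\<bullet>(x-y)))"
    by (rule continuous_on_compose2[OF cG1 cq]) auto
  moreover have "continuous_on UNIV (\<lambda>x::real^'n. G2 ((x-y)\<bullet>(x-y)))"
    by (rule continuous_on_compose2[OF c2 cq]) auto
  moreover have "continuous_on UNIV (\<lambda>x::real^'n. outer (x-y) (x-y))"
    unfolding outer_def by (intro continuous_intros)
  ultimately show "continuous_on UNIV (\<lambda>x. (2*G1((x-y)\<bullet>(x-y))) *\<^sub>R mat 1 + (4 * G2 ((x-y)\<bullet>(x-y))) *\<^sub>R outer (x-y) (x-y))"
    by (intro continuous_intros) auto
qed



lemma sym_outer: "symmetric_mat (a *\<^sub>R outer u u)"
  by (simp add: symmetric_mat_def transpose_def outer_def vec_eq_iff mult.commute)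

lemma sym_perp: "symmetric_mat (a *\<^sub>R (mat 1 - outer u u))"
  by (simp add: symmetric_mat_def transpose_def outer_def mat_def vec_eq_iff mult.commute)

lemma sym_neg: "symmetric_mat X \<Longrightarrow> symmetric_mat (- (X::real^'n^'n))"
  unfolding symmetric_mat_def using transpose_scalar[of "-1" X] by simp

lemma trace_scaleR: "trace (a *\<^sub>R (A::real^'n^'n)) = a * trace A"
  by (simp add: trace_def sum_distrib_left)

lemma trace_outer: "trace (outer u u) = u \<bullet> u"
  by (simp add: trace_def outer_def inner_vec_def)

lemma trace_perp: "trace (mat 1 - outer u u :: real^'n^'n) = real CARD('n) - u \<bullet> u"
proof -
  have "trace (mat 1 - outer u u :: real^'n^'n) = trace (mat 1 :: real^'n^'n) - trace (outer u u)"
    by (simp add: trace_def sum_subtractf)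
  then show ?thesis by (simp add: trace_I trace_outer)
qed

lemma psd_outer: "a \<ge> 0 \<Longrightarrow> psd_mat (a *\<^sub>R outer u u)"
  unfolding psd_mat_def
proof
  fix \<xi>
  assume a: "a \<ge> 0"
  have "(a *\<^sub>R outer u u) *v \<xi> = a *\<^sub>R ((u \<bullet> \<xi>) *\<^sub>R u)"
    by (simp only: scaleR_matrix_vector_assoc[symmetric] outer_mult)
  then have "\<xi> \<bullet> ((a *\<^sub>R outer u u) *v \<xi>) = a * ((u \<bullet> \<xi>) * (u \<bullet> \<xi>))"
    by (simp only: inner_scaleR_right inner_commute[of \<xi> u] mult.assoc)
  then show "0 \<le> \<xi> \<bullet> ((a *\<^sub>R outer u u) *v \<xi>)" using a by simp
qed

lemma psd_perp:
  fixes u :: "real^'n"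
  assumes "norm u = 1" "a \<ge> 0"
  shows "psd_mat (a *\<^sub>R (mat 1 - outer u u))"
  unfolding psd_mat_def
proof
  fix \<xi> :: "real^'n"
  have "(u \<bullet> \<xi>)\<^sup>2 \<le> (norm u * norm \<xi>)\<^sup>2"
    using power_mono[OF Cauchy_Schwarz_ineq2[of u \<xi>] abs_ge_zero, of 2] by simp
  then have "(u \<bullet> \<xi>) * (u \<bullet> \<xi>) \<le> \<xi> \<bullet> \<xi>"
    using assms(1) by (simp add: power2_eq_square power2_norm_eq_inner[symmetric])
  then have "0 \<le> \<xi> \<bullet> ((mat 1 - outer u u) *v \<xi>)"
    by (simp add: matrix_vector_mult_diff_rdistrib outer_mult inner_diff_right inner_commute)
  then show "0 \<le> \<xi> \<bullet> (a *\<^sub>R (mat 1 - outer u u) *v \<xi>)"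
    using assms(2) by (simp add: scaleR_matrix_vector_assoc[symmetric])
qed

lemma pucci_aux: "(la::real) \<le> A - B \<Longrightarrow> A - C \<le> D \<Longrightarrow> D = E \<Longrightarrow> B \<le> C + E - la"
  by linarith

lemma pucci:
  fixes F :: "real^'n \<Rightarrow> real \<Rightarrow> real^'n \<Rightarrow> real^'n^'n \<Rightarrow> real"
  assumes unif_ell: "\<And>x t p X Q. symmetric_mat X \<Longrightarrow> symmetric_mat Q \<Longrightarrow> psd_mat Q \<Longrightarrow>
           lam * trace Q \<le> F x t p X - F x t p (X + Q) \<and>
           F x t p X - F x t p (X + Q) \<le> Lam * trace Q"
    and u: "norm u = 1" and a: "a \<ge> 0" and be: "\<beta> \<le> 0"
  shows "F x t p (a *\<^sub>R outer u u + \<beta> *\<^sub>R (mat 1 - outer u u))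
          \<le> F x t p 0 + Lam * (real CARD('n) - 1) * (-\<beta>) - lam * a"
proof -
  let ?P = "a *\<^sub>R outer u u" and ?N = "(-\<beta>) *\<^sub>R (mat 1 - outer u u)"
  have uu: "u \<bullet> u = 1" using u by (simp add: norm_eq_1)
  have trP: "trace ?P = a" by (simp add: trace_scaleR trace_outer uu)
  have trN: "trace ?N = (-\<beta>) * (real CARD('n) - 1)" by (simp only: trace_scaleR trace_perp uu)
  have sN: "symmetric_mat (- ?N)" by (rule sym_neg[OF sym_perp])
  have e1: "lam * trace ?P \<le> F x t p (- ?N) - F x t p (- ?N + ?P)"
    using unif_ell[OF sN sym_outer psd_outer[OF a]] by blast
  have e2: "F x t p (- ?N) - F x t p (- ?N + ?N) \<le> Lam * trace ?N"
  proof -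
    have "0 \<le> -\<beta>" using be by simp
    then show ?thesis using unif_ell[OF sN sym_perp[of "-\<beta>"] psd_perp[OF u]] by blast
  qed
  have eq: "- ?N + ?P = a *\<^sub>R outer u u + \<beta> *\<^sub>R (mat 1 - outer u u)"
    by (simp add: algebra_simps)
  have z: "- ?N + ?N = 0" by simp
  have e1': "lam * a \<le> F x t p (- ?N) - F x t p (a *\<^sub>R outer u u + \<beta> *\<^sub>R (mat 1 - outer u u))"
    using e1 unfolding trP eq .
  have e2': "F x t p (- ?N) - F x t p 0 \<le> Lam * ((-\<beta>) * (real CARD('n) - 1))"
    using e2 unfolding trN z .
  have m: "Lam * ((-\<beta>) * (real CARD('n) - 1)) = Lam * (real CARD('n) - 1) * (-\<beta>)"
    by (simp only: mult.commute mult.left_commute mult.assoc)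
  show ?thesis by (rule pucci_aux[OF e1' e2' m])
qed



lemma outer_scale: "outer (c *\<^sub>R u) (c *\<^sub>R u) = (c*c) *\<^sub>R outer u u"
  by (simp add: outer_def vec_eq_iff)

lemma hess_decomp:
  fixes d :: "real^'n"
  assumes "d \<noteq> 0"
  shows "A *\<^sub>R mat 1 + B *\<^sub>R outer d d =
    (A + B*(d\<bullet>d)) *\<^sub>R outer (d /\<^sub>R norm d) (d /\<^sub>R norm d) + A *\<^sub>R (mat 1 - outer (d /\<^sub>R norm d) (d /\<^sub>R norm d))"
proof -
  have n: "norm d * norm d = d \<bullet> d" by (simp add: power2_norm_eq_inner[symmetric] power2_eq_square)
  have "outer (d /\<^sub>R norm d) (d /\<^sub>R norm d) = (1 / (d\<bullet>d)) *\<^sub>R outer d d"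
    using outer_scale[of "inverse (norm d)" d] n by (simp add: field_simps)
  moreover have "d \<bullet> d \<noteq> 0" using assms by simp
  ultimately show ?thesis by (simp add: algebra_simps)
qed

lemma lsc_diff:
  fixes v phi :: "real^'n \<Rightarrow> real"
  assumes "lsc v" "continuous_on UNIV phi"
  shows "lsc (\<lambda>x. v x - phi x)"
  unfolding lsc_def
proof (intro allI impI)
  fix x :: "real^'n" and e :: real assume e: "e > 0"
  have 1: "eventually (\<lambda>y. v x - e/2 < v y) (at x)" using assms(1) e unfolding lsc_def by auto
  have "isCont phi x" using assms(2) continuous_on_eq_continuous_at open_UNIV by blast
  then have "(phi \<longlongrightarrow> phi x) (at x)" by (simp add: isCont_def)
  then have 2: "eventually (\<lambda>y. dist (phi y) (phi x) < e/2) (at x)" using e unfolding tendsto_iff by (meson half_gt_zero)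
  show "eventually (\<lambda>y. v x - phi x - e < v y - phi y) (at x)"
    using 1 2
  proof eventually_elim
    case (elim y)
    have "\<bar>phi y - phi x\<bar> < e/2" using elim(2) unfolding dist_real_def .
    then have "phi y - phi x < e/2" unfolding abs_less_iff by blast
    then show ?case using elim(1) by linarith
  qed
qed

lemma C2_cont: "C2_with phi Dphi Hphi \<Longrightarrow> continuous_on UNIV phi"
  unfolding C2_with_def
  by (meson continuous_at_imp_continuous_on has_derivative_continuous)

lemma comparison:
  fixes F :: "real^'n \<Rightarrow> real \<Rightarrow> real^'n \<Rightarrow> real^'n^'n \<Rightarrow> real"
  assumes super: "visc_supersolution F v"
   and C2: "C2_with phi Dphi Hphi"
   and K: "compact K"
   and bd: "\<And>x. x \<in> K \<Longrightarrow> x \<notin> interior K \<Longrightarrow> phi x \<le> v x"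
   and strict: "\<And>x. x \<in> interior K \<Longrightarrow> v x < phi x \<Longrightarrow> F x (v x) (Dphi x) (Hphi x) < 0"
   and x: "x \<in> K"
  shows "phi x \<le> v x"
proof (rule ccontr)
  assume nx: "\<not> phi x \<le> v x"
  have "lsc v" using super unfolding visc_supersolution_def by auto
  then have l: "lsc (\<lambda>x. v x - phi x)" using lsc_diff C2_cont[OF C2] by blast
  obtain z where z: "z \<in> K" "\<And>y. y \<in> K \<Longrightarrow> v z - phi z \<le> v y - phi y"
    using lsc_min[OF l K] x by blast
  have neg: "v z < phi z" using z(2)[OF x] nx by simp
  then have zi: "z \<in> interior K" using bd z(1) by force
  then obtain r where r: "r > 0" "ball z r \<subseteq> K"
    using open_contains_ball interior_subset open_interior by (metis subset_trans)
  have "\<forall>y. dist y z < r \<longrightarrow> v z - phi z \<le> v y - phi y"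
    using r z(2) by (auto simp: dist_commute subset_iff)
  then have "F z (v z) (Dphi z) (Hphi z) \<ge> 0"
    using super C2 r(1) unfolding visc_supersolution_def by blast
  then show False using strict[OF zi neg] by simp
qed



lemma gauss_strict:
  fixes F :: "real^'n \<Rightarrow> real \<Rightarrow> real^'n \<Rightarrow> real^'n^'n \<Rightarrow> real"
    and b :: "real^'n \<Rightarrow> 'a \<Rightarrow> real^'n" and c :: "real^'n \<Rightarrow> 'a \<Rightarrow> real"
  assumes unif_ell: "\<And>x t p X Q. symmetric_mat X \<Longrightarrow> symmetric_mat Q \<Longrightarrow> psd_mat Q \<Longrightarrow>
           lam * trace Q \<le> F x t p X - F x t p (X + Q) \<and>
           F x t p X - F x t p (X + Q) \<le> Lam * trace Q"
    and lam: "lam > 0" and Lam: "Lam \<ge> 0"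
    and F_sup: "\<And>x t p. F x t p 0 \<le> (SUP \<alpha>. c x \<alpha> * t - b x \<alpha> \<bullet> p)"
    and Kb: "\<And>x a. norm x \<le> norm y + R \<Longrightarrow> norm (b x a) \<le> Kb"
    and Kb0: "Kb \<ge> 0" and R: "R > 0" and de: "\<delta> > 0"
    and al: "al = 2*(Kb*R + Lam*real CARD('n) + lam + 1)/(lam*R\<^sup>2) + 2/R\<^sup>2"
    and xr: "R/2 \<le> norm (x - y)" "norm (x - y) \<le> R"
    and ct: "\<And>a. c x a * t \<le> 0"
  shows "F x t ((2 * (-(al*\<delta>*exp(-al*((x-y)\<bullet>(x-y)))))) *\<^sub>R (x-y))
     ((2 * (-(al*\<delta>*exp(-al*((x-y)\<bullet>(x-y)))))) *\<^sub>R mat 1 +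
      (4 * (al\<^sup>2*\<delta>*exp(-al*((x-y)\<bullet>(x-y))))) *\<^sub>R outer (x-y) (x-y)) < 0"
proof -
  define d where "d = x - y"
  define q where "q = d \<bullet> d"
  define E where "E = exp(-al*q)"
  define u where "u = d /\<^sub>R norm d"
  have E0: "E > 0" unfolding E_def by simp
  have d0: "d \<noteq> 0" using xr R unfolding d_def by auto
  have un: "norm u = 1" using d0 unfolding u_def by simp
  have qn: "q = (norm d)\<^sup>2" unfolding q_def by (simp add: power2_norm_eq_inner)
  have qlo: "q \<ge> R\<^sup>2/4"
  proof -
    have "(R/2)\<^sup>2 \<le> (norm d)\<^sup>2" using xr R unfolding d_def by (intro power_mono) auto
    then show ?thesis unfolding qn by (simp add: power_divide)
  qed
  have R2: "R\<^sup>2 > 0" using R by simp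
  define C where "C = Kb*R + Lam*real CARD('n) + lam"
  have C0: "C \<ge> 0" unfolding C_def using Kb0 R Lam lam by simp
  have al1: "al * R\<^sup>2 = 2*(C+1)/lam + 2" unfolding al C_def using R2 lam by (simp add: field_simps)
  have "2*(C+1)/lam \<ge> 0" using C0 lam by simp
  then have "al * R\<^sup>2 > 0" using al1 by linarith
  then have alpos: "al > 0" using R2 by (simp add: zero_less_mult_iff)
  have alq: "al * q \<ge> al * R\<^sup>2 / 4" using qlo alpos by (simp add: mult_left_mono[OF qlo, of al, simplified] )
  have aq1: "2 * al * q \<ge> 1"
  proof -
    have "2*(C+1)/lam \<ge> 0" using C0 lam by simp
    then show ?thesis using alq al1 by linarith
  qed
  have key: "C < 2 * lam * al * q"
  proof -
    have "lam * (al * R\<^sup>2) = 2*(C+1) + 2*lam" using al1 lam by (simp add: field_simps)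
    moreover have "lam * (al*q) \<ge> lam * (al * R\<^sup>2 / 4)" using alq lam by simp
    ultimately show ?thesis using lam by (simp add: algebra_simps)
  qed
  let ?A = "2 * (-(al*\<delta>*E))" and ?B = "4 * (al\<^sup>2*\<delta>*E)"
  have H: "?A *\<^sub>R mat 1 + ?B *\<^sub>R outer d d = (?A + ?B*q) *\<^sub>R outer u u + ?A *\<^sub>R (mat 1 - outer u u)"
    using hess_decomp[OF d0] unfolding u_def q_def by blast
  have a0: "?A + ?B*q \<ge> 0"
  proof -
    have "?A + ?B*q = 2*al*\<delta>*E*(2*al*q - 1)" by (simp add: power2_eq_square algebra_simps)
    then show ?thesis using aq1 alpos de E0 by simp
  qed
  have b0: "?A \<le> 0" using alpos de E0 by simp
  have P: "F x t (?A *\<^sub>R d) ((?A + ?B*q) *\<^sub>R outer u u + ?A *\<^sub>R (mat 1 - outer u u))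
     \<le> F x t (?A *\<^sub>R d) 0 + Lam * (real CARD('n) - 1) * (-?A) - lam * (?A + ?B*q)"
    by (rule pucci[OF unif_ell un a0 b0])
  have xb: "norm x \<le> norm y + R"
    using norm_triangle_ineq[of y "x-y"] xr by simp
  have F0: "F x t (?A *\<^sub>R d) 0 \<le> 2*al*\<delta>*E*(Kb*R)"
  proof -
    have "(SUP a. c x a * t - b x a \<bullet> (?A *\<^sub>R d)) \<le> 2*al*\<delta>*E*(Kb*R)"
    proof (rule cSUP_least)
      fix a
      have "b x a \<bullet> d \<le> norm (b x a) * norm d" by (rule norm_cauchy_schwarz)
      also have "\<dots> \<le> Kb * R" using Kb[OF xb] xr d_def Kb0 by (intro mult_mono) auto
      finally have "b x a \<bullet> d \<le> Kb*R" .
      then have "2*al*\<delta>*E*(b x a \<bullet> d) \<le> 2*al*\<delta>*E*(Kb*R)"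
        using alpos de E0 by (intro mult_left_mono) auto
      then show "c x a * t - b x a \<bullet> (?A *\<^sub>R d) \<le> 2*al*\<delta>*E*(Kb*R)"
        using ct[of a] by (simp add: algebra_simps)
    qed simp
    then show ?thesis using F_sup[of x t "?A *\<^sub>R d"] by linarith
  qed
  have "F x t (?A *\<^sub>R d) (?A *\<^sub>R mat 1 + ?B *\<^sub>R outer d d)
      \<le> 2*al*\<delta>*E*(Kb*R) + Lam * (real CARD('n) - 1) * (2*al*\<delta>*E) - lam * (2*al*\<delta>*E*(2*al*q - 1))"
    using P F0 unfolding H by (simp add: power2_eq_square algebra_simps)
  also have "\<dots> = 2*al*\<delta>*E*(Kb*R + Lam * (real CARD('n) - 1) + lam - 2*lam*al*q)"
    by (simp add: algebra_simps)
  also have "\<dots> < 0"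
  proof -
    have "Kb*R + Lam * (real CARD('n) - 1) + lam - 2*lam*al*q < 0"
      using key Lam unfolding C_def by (simp add: algebra_simps)
    then show ?thesis using alpos de E0 by (simp add: mult_pos_neg)
  qed
  finally show ?thesis unfolding d_def[symmetric] q_def[symmetric] E_def[symmetric] .
qed



lemma lsc_open_super:
  fixes v :: "real^'n \<Rightarrow> real"
  assumes "lsc v" shows "open {y. m < v y}"
  unfolding open_subopen[of "{y. m < v y}"]
  using lsc_open_nbhd[OF assms] by (metis (mono_tags, lifting) mem_Collect_eq subsetI)

lemma strong_min:
  fixes F :: "real^'n \<Rightarrow> real \<Rightarrow> real^'n \<Rightarrow> real^'n^'n \<Rightarrow> real"
    and b :: "real^'n \<Rightarrow> 'a \<Rightarrow> real^'n" and c :: "real^'n \<Rightarrow> 'a \<Rightarrow> real"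
  assumes unif_ell: "\<And>x t p X Q. symmetric_mat X \<Longrightarrow> symmetric_mat Q \<Longrightarrow> psd_mat Q \<Longrightarrow>
           lam * trace Q \<le> F x t p X - F x t p (X + Q) \<and>
           F x t p X - F x t p (X + Q) \<le> Lam * trace Q"
    and lam: "lam > 0" and Lam: "Lam \<ge> 0"
    and F_sup: "\<And>x t p. F x t p 0 \<le> (SUP \<alpha>. c x \<alpha> * t - b x \<alpha> \<bullet> p)"
    and bc_bound: "\<And>R. R > 0 \<Longrightarrow> \<exists>K. (\<forall>x \<alpha>. norm x \<le> R \<longrightarrow> norm (b x \<alpha>) + \<bar>c x \<alpha>\<bar> \<le> K) \<and>
           (\<forall>x y \<alpha>. norm x \<le> R \<longrightarrow> norm y \<le> R \<longrightarrow> norm (b x \<alpha> - b y \<alpha>) \<le> K * norm (x - y))"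
    and hc: "\<And>x a. c x a * v x \<le> 0"
    and super: "visc_supersolution F v"
    and zmin: "\<And>x. v z \<le> v x"
  shows "v x = v z"
proof (rule ccontr)
  assume "v x \<noteq> v z"
  then have vx: "v z < v x" using zmin[of x] by simp
  define m where "m = v z"
  have lscv: "lsc v" using super unfolding visc_supersolution_def by auto
  define M where "M = {y. v y \<le> m}"
  have "M = - {y. m < v y}" unfolding M_def by auto
  then have clM: "closed M" using lsc_open_super[OF lscv] by (simp add: closed_def)
  have Mne: "M \<noteq> {}" using M_def m_def by auto
  have xM: "x \<notin> M" using vx m_def M_def by auto
  define y where "y = x"
  define R where "R = infdist y M"
  have R: "R > 0" unfolding R_def y_def using infdist_pos_not_in_closed[OF clM Mne xM] .
  obtain z' where z': "z' \<in> M" "R = dist y z'"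
    using infdist_attains_inf[OF clM Mne, of y] R_def by metis
  have outM: "\<And>w. norm (w - y) < R \<Longrightarrow> m < v w"
  proof -
    fix w assume "norm (w - y) < R"
    then have "dist y w < R" by (simp add: dist_norm norm_minus_commute)
    then have "w \<notin> M" using infdist_le[of w M y] R_def by force
    then show "m < v w" unfolding M_def by simp
  qed
  obtain q where q: "q \<in> cball y (R/2)" "\<And>w. w \<in> cball y (R/2) \<Longrightarrow> v q \<le> v w"
    using lsc_min[OF lscv compact_cball, of y "R/2"] R by auto
  have "norm (q - y) < R" using q(1) R by (simp add: dist_norm norm_minus_commute)
  then have mq: "m < v q" by (rule outM)
  define \<delta> where "\<delta> = v q - m"
  have de: "\<delta> > 0" using mq \<delta>_def by simp
  obtain K where K: "\<And>x a. norm x \<le> norm y + R \<Longrightarrow> norm (b x a) + \<bar>c x a\<bar> \<le> K"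
    using bc_bound[of "norm y + R"] R by (metis add_nonneg_pos norm_ge_zero)
  have Kb: "\<And>x a. norm x \<le> norm y + R \<Longrightarrow> norm (b x a) \<le> K"
    using K by (smt (verit, best) abs_ge_zero)
  have K0: "K \<ge> 0" using Kb[of y undefined] R by (smt (verit) norm_ge_zero)
  define al where "al = 2*(K*R + Lam*real CARD('n) + lam + 1)/(lam*R\<^sup>2) + 2/R\<^sup>2"
  have alpos: "al > 0" unfolding al_def using K0 R lam Lam by (intro add_nonneg_pos) auto
  define phi where "phi = (\<lambda>w. m + \<delta>*(exp(-al*((w-y)\<bullet>(w-y))) - exp(-al*R\<^sup>2)))"
  define Dphi where "Dphi = (\<lambda>w. (2 * (-(al*\<delta>*exp(-al*((w-y)\<bullet>(w-y)))))) *\<^sub>R (w-y))"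
  define Hphi where "Hphi = (\<lambda>w. (2 * (-(al*\<delta>*exp(-al*((w-y)\<bullet>(w-y)))))) *\<^sub>R mat 1 +
      (4 * (al\<^sup>2*\<delta>*exp(-al*((w-y)\<bullet>(w-y))))) *\<^sub>R outer (w-y) (w-y))"
  define G0 where "G0 = (\<lambda>s. m + \<delta>*(exp(-al * s) - exp(-al*R\<^sup>2)))"
  define G1 where "G1 = (\<lambda>s. -(al*\<delta>*exp(-al * s)))"
  define G2 where "G2 = (\<lambda>s::real. al\<^sup>2*\<delta>*exp(-al * s))"
  have d1: "\<And>s. s \<ge> 0 \<Longrightarrow> (G0 has_real_derivative G1 s) (at s)"
    unfolding G0_def G1_def by (auto intro!: derivative_eq_intros simp: algebra_simps)
  have d2: "\<And>s. s \<ge> 0 \<Longrightarrow> (G1 has_real_derivative G2 s) (at s)"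
    unfolding G1_def G2_def by (auto intro!: derivative_eq_intros simp: algebra_simps power2_eq_square)
  have c2: "continuous_on {0..} G2" unfolding G2_def by (intro continuous_intros)
  have C2: "C2_with phi Dphi Hphi"
    using C2_radial[OF d1 d2 c2, of y] unfolding phi_def Dphi_def Hphi_def G0_def G1_def G2_def .
  have strict: "\<And>w t. R/2 \<le> norm (w - y) \<Longrightarrow> norm (w - y) \<le> R \<Longrightarrow> (\<And>a. c w a * t \<le> 0) \<Longrightarrow>
      F w t (Dphi w) (Hphi w) < 0"
    unfolding Dphi_def Hphi_def
    by (rule gauss_strict[OF unif_ell lam Lam F_sup Kb K0 R de al_def]) auto
  have outside: "\<And>w. norm (w - y) \<le> R/2 \<or> R \<le> norm (w - y) \<Longrightarrow> phi w \<le> v w"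
  proof -
    fix w assume w: "norm (w - y) \<le> R/2 \<or> R \<le> norm (w - y)"
    have qn: "(w-y)\<bullet>(w-y) = (norm (w-y))\<^sup>2" by (simp add: power2_norm_eq_inner)
    show "phi w \<le> v w"
    proof (cases "norm (w - y) \<le> R/2")
      case True
      then have "w \<in> cball y (R/2)" by (simp add: dist_norm norm_minus_commute)
      then have "v w \<ge> m + \<delta>" using q(2) \<delta>_def by force
      moreover have "exp(-al*((w-y)\<bullet>(w-y))) \<le> 1" using alpos by (simp add: mult_nonneg_nonneg)
      moreover have "exp(-al*R\<^sup>2) \<ge> 0" by simp
      ultimately have "exp(-al*((w-y)\<bullet>(w-y))) - exp(-al*R\<^sup>2) \<le> 1" "m + \<delta> \<le> v w" by linarith+
      then have "\<delta> * (exp(-al*((w-y)\<bullet>(w-y))) - exp(-al*R\<^sup>2)) \<le> \<delta> * 1"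
        using de by (intro mult_left_mono) auto
      with \<open>m + \<delta> \<le> v w\<close> show ?thesis unfolding phi_def by simp
    next
      case False
      then have "R \<le> norm (w - y)" using w by simp
      then have "R\<^sup>2 \<le> (w-y)\<bullet>(w-y)" unfolding qn using R by (intro power_mono) auto
      then have ee: "exp(-al*((w-y)\<bullet>(w-y))) \<le> exp(-al*R\<^sup>2)" using alpos by simp
      have "v w \<ge> m" using zmin m_def by simp
      from ee have "\<delta> * (exp(-al*((w-y)\<bullet>(w-y))) - exp(-al*R\<^sup>2)) \<le> \<delta> * 0"
        using de by (intro mult_left_mono) auto
      with \<open>v w \<ge> m\<close> show ?thesis unfolding phi_def by simp
    qed
  qed
  define Kset where "Kset = {w. R/2 \<le> norm (w - y) \<and> norm (w - y) \<le> R}"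
  have cK: "compact Kset"
  proof -
    have "closed Kset" unfolding Kset_def
      by (intro closed_Collect_conj closed_Collect_le continuous_intros)
    moreover have "Kset \<subseteq> cball y R" unfolding Kset_def by (auto simp: dist_norm norm_minus_commute)
    ultimately show ?thesis using compact_eq_bounded_closed bounded_cball bounded_subset by blast
  qed
  have intK: "{w. R/2 < norm (w - y) \<and> norm (w - y) < R} \<subseteq> interior Kset"
    unfolding Kset_def
    by (rule interior_maximal) (auto intro!: open_Collect_conj open_Collect_less continuous_intros)
  have all: "\<And>w. phi w \<le> v w"
  proof -
    fix w
    show "phi w \<le> v w"
    proof (cases "w \<in> Kset")
      case False then show ?thesis using outside unfolding Kset_def by auto
    next
      case True
      show ?thesis
      proof (rule comparison[OF super C2 cK _ _ True])
        fix x assume "x \<in> Kset" "x \<notin> interior Kset"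
        then have "norm (x - y) \<le> R/2 \<or> R \<le> norm (x - y)" using intK by (auto simp: subset_iff not_le)
        then show "phi x \<le> v x" by (rule outside)
      next
        fix x assume "x \<in> interior Kset"
        then have "x \<in> Kset" using interior_subset by blast
        then show "F x (v x) (Dphi x) (Hphi x) < 0"
          using strict hc unfolding Kset_def by auto
      qed
    qed
  qed
  have nz: "norm (z' - y) = R" using z'(2) by (simp add: dist_norm norm_minus_commute)
  have vz': "v z' = m" using z'(1) zmin m_def M_def by (simp add: antisym)
  have pz': "phi z' = m"
  proof -
    have "(z'-y)\<bullet>(z'-y) = R\<^sup>2" using nz by (simp add: power2_norm_eq_inner[symmetric])
    then show ?thesis unfolding phi_def by simp
  qed
  have "\<forall>w. dist w z' < 1 \<longrightarrow> v z' - phi z' \<le> v w - phi w" using all vz' pz' by auto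
  then have "F z' (v z') (Dphi z') (Hphi z') \<ge> 0"
    using super C2 unfolding visc_supersolution_def by (meson zero_less_one)
  moreover have "F z' (v z') (Dphi z') (Hphi z') < 0"
    using strict[of z' "v z'"] nz R hc by auto
  ultimately show False by simp
qed



lemma log_strict:
  fixes F :: "real^'n \<Rightarrow> real \<Rightarrow> real^'n \<Rightarrow> real^'n^'n \<Rightarrow> real"
    and b :: "real^'n \<Rightarrow> 'a \<Rightarrow> real^'n" and c :: "real^'n \<Rightarrow> 'a \<Rightarrow> real"
  assumes unif_ell: "\<And>x t p X Q. symmetric_mat X \<Longrightarrow> symmetric_mat Q \<Longrightarrow> psd_mat Q \<Longrightarrow>
           lam * trace Q \<le> F x t p X - F x t p (X + Q) \<and>
           F x t p X - F x t p (X + Q) \<le> Lam * trace Q"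
    and lam: "lam > 0"
    and F_sup: "\<And>x t p. F x t p 0 \<le> (SUP \<alpha>. c x \<alpha> * t - b x \<alpha> \<bullet> p)"
    and bx: "\<And>a. b x a \<bullet> x - c x a * (norm x)\<^sup>2 * ln (norm x) \<le> lam - (real CARD('n) - 1) * Lam"
    and x0: "x \<noteq> 0" and ep: "\<epsilon> > 0"
    and Hd: "hA > 0" and H12: "hA + (x\<bullet>x) * hB < 0"
    and ct: "\<And>a. c x a * (t + 2*\<epsilon>*hA*((norm x)\<^sup>2 * ln (norm x))) \<le> 0"
  shows "F x t ((2 * (-\<epsilon>*hA)) *\<^sub>R x) ((2 * (-\<epsilon>*hA)) *\<^sub>R mat 1 + (4 * (-\<epsilon>*hB)) *\<^sub>R outer x x) < 0"
proof -
  define q where "q = x \<bullet> x"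
  define u where "u = x /\<^sub>R norm x"
  have un: "norm u = 1" using x0 unfolding u_def by simp
  have qn: "(norm x)\<^sup>2 = q" unfolding q_def by (simp add: power2_norm_eq_inner)
  let ?A = "2 * (-\<epsilon>*hA)" and ?B = "4 * (-\<epsilon>*hB)"
  have H: "?A *\<^sub>R mat 1 + ?B *\<^sub>R outer x x = (?A + ?B*q) *\<^sub>R outer u u + ?A *\<^sub>R (mat 1 - outer u u)"
    using hess_decomp[OF x0] unfolding u_def q_def by blast
  have a0: "?A + ?B*q \<ge> 0"
  proof -
    have "?A + ?B*q = -2*\<epsilon>*(2*(hA + q*hB) - hA)" by (simp add: algebra_simps)
    moreover have "2*(hA + q*hB) - hA < 0" using H12 Hd unfolding q_def by simp
    ultimately show ?thesis using ep by (simp add: mult_nonneg_nonpos mult_pos_neg)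
  qed
  have b0: "?A \<le> 0" using ep Hd by simp
  have P: "F x t (?A *\<^sub>R x) ((?A + ?B*q) *\<^sub>R outer u u + ?A *\<^sub>R (mat 1 - outer u u))
     \<le> F x t (?A *\<^sub>R x) 0 + Lam * (real CARD('n) - 1) * (-?A) - lam * (?A + ?B*q)"
    by (rule pucci[OF unif_ell un a0 b0])
  define K0 where "K0 = lam - (real CARD('n) - 1) * Lam"
  have F0: "F x t (?A *\<^sub>R x) 0 \<le> 2*\<epsilon>*hA*K0"
  proof -
    have "(SUP a. c x a * t - b x a \<bullet> (?A *\<^sub>R x)) \<le> 2*\<epsilon>*hA*K0"
    proof (rule cSUP_least)
      fix a
      have "2*\<epsilon>*hA*(b x a \<bullet> x) \<le> 2*\<epsilon>*hA*(K0 + c x a * (norm x)\<^sup>2 * ln (norm x))"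
        using bx[of a] ep Hd unfolding K0_def by (intro mult_left_mono) auto
      then show "c x a * t - b x a \<bullet> (?A *\<^sub>R x) \<le> 2*\<epsilon>*hA*K0"
        using ct[of a] by (simp add: algebra_simps)
    qed simp
    then show ?thesis using F_sup[of x t "?A *\<^sub>R x"] by linarith
  qed
  have "F x t (?A *\<^sub>R x) (?A *\<^sub>R mat 1 + ?B *\<^sub>R outer x x)
      \<le> 2*\<epsilon>*hA*K0 + Lam * (real CARD('n) - 1) * (2*\<epsilon>*hA) - lam * (?A + ?B*q)"
    using P F0 unfolding H by linarith
  also have "\<dots> = 4*lam*\<epsilon>*(hA + q*hB)"
    unfolding K0_def by (simp add: algebra_simps)
  also have "\<dots> < 0"
    using lam ep H12 unfolding q_def by (simp add: mult_pos_neg)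
  finally show ?thesis .
qed



lemma ln_norm_sq: "x \<noteq> 0 \<Longrightarrow> ln (x \<bullet> x) = 2 * ln (norm (x::real^'n))"
proof -
  assume "x \<noteq> 0"
  then have p: "norm x > 0" by simp
  have "x \<bullet> x = norm x * norm x" by (simp add: power2_norm_eq_inner[symmetric] power2_eq_square)
  then show ?thesis using p by (simp add: ln_mult)
qed

lemma attains_min:
  fixes F :: "real^'n \<Rightarrow> real \<Rightarrow> real^'n \<Rightarrow> real^'n^'n \<Rightarrow> real"
    and b :: "real^'n \<Rightarrow> 'a \<Rightarrow> real^'n" and c :: "real^'n \<Rightarrow> 'a \<Rightarrow> real"
    and v :: "real^'n \<Rightarrow> real" and H Hd Hdd :: "real \<Rightarrow> real"
  assumes unif_ell: "\<And>x t p X Q. symmetric_mat X \<Longrightarrow> symmetric_mat Q \<Longrightarrow> psd_mat Q \<Longrightarrow>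
           lam * trace Q \<le> F x t p X - F x t p (X + Q) \<and>
           F x t p X - F x t p (X + Q) \<le> Lam * trace Q"
    and lam: "lam > 0"
    and F_sup: "\<And>x t p. F x t p 0 \<le> (SUP \<alpha>. c x \<alpha> * t - b x \<alpha> \<bullet> p)"
    and bc_bound: "\<And>R. R > 0 \<Longrightarrow> \<exists>K. (\<forall>x \<alpha>. norm x \<le> R \<longrightarrow> norm (b x \<alpha>) + \<bar>c x \<alpha>\<bar> \<le> K) \<and>
           (\<forall>x y \<alpha>. norm x \<le> R \<longrightarrow> norm y \<le> R \<longrightarrow> norm (b x \<alpha> - b y \<alpha>) \<le> K * norm (x - y))"
    and c_nonneg: "\<And>x \<alpha>. c x \<alpha> \<ge> 0"
    and Ro: "\<exists>Ro>0. \<forall>x. norm x \<ge> Ro \<longrightarrow>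
           (SUP \<alpha>. b x \<alpha> \<bullet> x - c x \<alpha> * (norm x)\<^sup>2 * ln (norm x))
             \<le> lam - (real CARD('n) - 1) * Lam"
    and super: "visc_supersolution F v"
    and growth: "Liminf at_infinity (\<lambda>x. ereal (v x / ln (norm x))) \<ge> 0"
    and alt: "(\<forall>x \<alpha>. c x \<alpha> = 0) \<or> (\<forall>x. v x \<le> 0)"
    and dH: "\<And>s. s \<ge> 0 \<Longrightarrow> (H has_real_derivative Hd s) (at s)"
    and dH1: "\<And>s. s \<ge> 0 \<Longrightarrow> (Hd has_real_derivative Hdd s) (at s)"
    and cH2: "continuous_on {0..} Hdd"
    and H1pos: "\<And>s. s \<ge> 0 \<Longrightarrow> Hd s > 0"
    and Hpos: "\<And>s. s \<ge> 0 \<Longrightarrow> H s \<ge> 0"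
    and Hlog: "\<And>s. s \<ge> 1 \<Longrightarrow> ln s / 2 \<le> H s"
    and S: "\<And>s. s \<ge> S \<Longrightarrow> Hd s + s * Hdd s < 0 \<and> Hd s * s * ln s \<le> H s"
  shows "\<exists>z. \<forall>x. v z \<le> v x"
proof -
  obtain Ro0 where Ro0: "Ro0 > 0" "\<And>x. norm x \<ge> Ro0 \<Longrightarrow>
      (SUP \<alpha>. b x \<alpha> \<bullet> x - c x \<alpha> * (norm x)\<^sup>2 * ln (norm x)) \<le> lam - (real CARD('n) - 1) * Lam"
    using Ro by blast
  define \<rho> where "\<rho> = max Ro0 (max 1 S)"
  have \<rho>1: "\<rho> \<ge> 1" unfolding \<rho>_def by simp
  have bx: "\<And>x a. norm x \<ge> \<rho> \<Longrightarrow> b x a \<bullet> x - c x a * (norm x)\<^sup>2 * ln (norm x) \<le> lam - (real CARD('n) - 1) * Lam"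
  proof -
    fix x :: "real^'n" and a assume nx: "norm x \<ge> \<rho>"
    then have nx1: "norm x \<ge> 1" using \<rho>1 by simp
    obtain K where K: "\<And>y a. norm y \<le> norm x \<Longrightarrow> norm (b y a) + \<bar>c y a\<bar> \<le> K"
      using bc_bound[of "norm x"] nx1 by (metis less_le_trans zero_less_one)
    have tb: "b x a' \<bullet> x - c x a' * (norm x)\<^sup>2 * ln (norm x) \<le> K * norm x" for a'
    proof -
      have "b x a' \<bullet> x \<le> norm (b x a') * norm x" by (rule norm_cauchy_schwarz)
      also have "\<dots> \<le> K * norm x" using K[of x a'] abs_ge_zero[of "c x a'"] by (intro mult_right_mono) auto
      finally have "b x a' \<bullet> x \<le> K * norm x" .
      moreover have "c x a' * (norm x)\<^sup>2 * ln (norm x) \<ge> 0" using c_nonneg nx1 by simp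
      ultimately show ?thesis by linarith
    qed
    have "bdd_above (range (\<lambda>a. b x a \<bullet> x - c x a * (norm x)\<^sup>2 * ln (norm x)))"
      by (rule bdd_aboveI2[of _ _ "K * norm x"]) (rule tb)
    then have "b x a \<bullet> x - c x a * (norm x)\<^sup>2 * ln (norm x) \<le> (SUP \<alpha>. b x \<alpha> \<bullet> x - c x \<alpha> * (norm x)\<^sup>2 * ln (norm x))"
      by (rule cSUP_upper[OF UNIV_I])
    also have "\<dots> \<le> lam - (real CARD('n) - 1) * Lam" using Ro0(2) nx unfolding \<rho>_def by simp
    finally show "b x a \<bullet> x - c x a * (norm x)\<^sup>2 * ln (norm x) \<le> lam - (real CARD('n) - 1) * Lam" .
  qed
  have lscv: "lsc v" using super unfolding visc_supersolution_def by auto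
  obtain z0 where z0: "z0 \<in> cball 0 \<rho>" "\<And>w. w \<in> cball 0 \<rho> \<Longrightarrow> v z0 \<le> v w"
    using lsc_min[OF lscv compact_cball, of 0 \<rho>] \<rho>1 by auto
  define m where "m = v z0"
  have m0: "(\<forall>x \<alpha>. c x \<alpha> = 0) \<or> m \<le> 0" using alt m_def by auto
  have inball: "\<And>w. norm w \<le> \<rho> \<Longrightarrow> m \<le> v w" using z0(2) m_def by auto
  have key: "m - \<epsilon> * H (x0 \<bullet> x0) \<le> v x0" if ep: "\<epsilon> > 0" and x0: "norm x0 \<ge> \<rho>" for \<epsilon> x0
  proof -
    have "ereal (-\<epsilon>/2) < Liminf at_infinity (\<lambda>x. ereal (v x / ln (norm x)))"
    proof -
      have "ereal (-\<epsilon>/2) < 0" using ep by simp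
      then show ?thesis using growth by (rule less_le_trans)
    qed
    then have "eventually (\<lambda>x. ereal (-\<epsilon>/2) < ereal (v x / ln (norm x))) at_infinity"
      by (rule less_LiminfD)
    then obtain R1 where R1: "\<And>x. R1 \<le> norm x \<Longrightarrow> -\<epsilon>/2 < v x / ln (norm x)"
      unfolding eventually_at_infinity by auto
    define R' where "R' = max (max R1 \<rho>) (max (norm x0) (exp (2*\<bar>m\<bar>/\<epsilon>))) + 1"
    have R'1: "R' > 1" unfolding R'_def using \<rho>1 by simp
    define psi where "psi = (\<lambda>x::real^'n. m - \<epsilon> * H (x \<bullet> x))"
    define Dpsi where "Dpsi = (\<lambda>x::real^'n. (2 * (-\<epsilon>*Hd (x \<bullet> x))) *\<^sub>R x)"
    define Hpsi where "Hpsi = (\<lambda>x::real^'n. (2 * (-\<epsilon>*Hd (x \<bullet> x))) *\<^sub>R mat 1 + (4 * (-\<epsilon>*Hdd (x \<bullet> x))) *\<^sub>R outer x x)"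
    define G0 where "G0 = (\<lambda>s. m - \<epsilon> * H s)"
    define G1 where "G1 = (\<lambda>s. -\<epsilon> * Hd s)"
    define G2 where "G2 = (\<lambda>s. -\<epsilon> * Hdd s)"
    have d1: "\<And>s. s \<ge> 0 \<Longrightarrow> (G0 has_real_derivative G1 s) (at s)"
      unfolding G0_def G1_def using dH by (auto intro!: derivative_eq_intros)
    have d2: "\<And>s. s \<ge> 0 \<Longrightarrow> (G1 has_real_derivative G2 s) (at s)"
      unfolding G1_def G2_def using dH1 by (auto intro!: derivative_eq_intros)
    have c2: "continuous_on {0..} G2" unfolding G2_def using cH2 by (intro continuous_intros)
    have C2: "C2_with psi Dpsi Hpsi"
      using C2_radial[OF d1 d2 c2, of 0] unfolding psi_def Dpsi_def Hpsi_def G0_def G1_def G2_def diff_zero .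
    have outside: "psi x \<le> v x" if x: "norm x \<le> \<rho> \<or> R' \<le> norm x" for x
    proof (cases "norm x \<le> \<rho>")
      case True
      then show ?thesis using inball[OF True] mult_nonneg_nonneg[OF _ Hpos[of "x \<bullet> x"], of \<epsilon>] ep unfolding psi_def by simp
    next
      case False
      then have xR: "R' \<le> norm x" using x by simp
      then have nx1: "norm x > 1" using R'1 by simp
      then have lnp: "ln (norm x) > 0" by (simp add: ln_gt_zero)
      have "-\<epsilon>/2 < v x / ln (norm x)" using R1 xR unfolding R'_def by simp
      then have vlo: "-\<epsilon>/2 * ln (norm x) < v x" using lnp by (simp add: pos_less_divide_eq)
      have x0': "x \<noteq> 0" using nx1 by auto
      have "x \<bullet> x \<ge> 1" using nx1 by (simp add: power2_norm_eq_inner[symmetric] one_le_power)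
      then have "ln (x \<bullet> x) / 2 \<le> H (x \<bullet> x)" by (rule Hlog)
      then have Hl: "ln (norm x) \<le> H (x \<bullet> x)" using ln_norm_sq[OF x0'] by simp
      have "exp (2*\<bar>m\<bar>/\<epsilon>) \<le> norm x" using xR unfolding R'_def by simp
      then have "2*\<bar>m\<bar>/\<epsilon> \<le> ln (norm x)" using nx1 x0' ln_le_cancel_iff[of "exp (2*\<bar>m\<bar>/\<epsilon>)" "norm x"] by simp
      then have "2*\<bar>m\<bar> \<le> \<epsilon> * ln (norm x)" using ep by (simp add: divide_le_eq mult.commute)
      then have "m \<le> \<epsilon>/2 * ln (norm x)" by simp
      moreover have "\<epsilon> * ln (norm x) \<le> \<epsilon> * H (x \<bullet> x)" using Hl ep by simp
      ultimately show ?thesis using vlo unfolding psi_def by (simp add: algebra_simps)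
    qed
    define Kset where "Kset = {w::real^'n. \<rho> \<le> norm w \<and> norm w \<le> R'}"
    have cK: "compact Kset"
    proof -
      have "closed Kset" unfolding Kset_def
        by (intro closed_Collect_conj closed_Collect_le continuous_intros)
      moreover have "Kset \<subseteq> cball 0 R'" unfolding Kset_def by auto
      ultimately show ?thesis using compact_eq_bounded_closed bounded_cball bounded_subset by blast
    qed
    have intK: "{w. \<rho> < norm w \<and> norm w < R'} \<subseteq> interior Kset"
      unfolding Kset_def
      by (rule interior_maximal) (auto intro!: open_Collect_conj open_Collect_less continuous_intros)
    have x0K: "x0 \<in> Kset" using x0 unfolding Kset_def R'_def by auto
    have "psi x0 \<le> v x0"
    proof (rule comparison[OF super C2 cK _ _ x0K])
      fix x assume "x \<in> Kset" "x \<notin> interior Kset"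
      then have "norm x \<le> \<rho> \<or> R' \<le> norm x" using intK by (auto simp: subset_iff not_le)
      then show "psi x \<le> v x" by (rule outside)
    next
      fix x assume xi: "x \<in> interior Kset" and vx: "v x < psi x"
      then have "x \<in> Kset" using interior_subset by blast
      then have nx: "norm x \<ge> \<rho>" unfolding Kset_def by simp
      then have nx1: "norm x \<ge> 1" using \<rho>1 by simp
      have x0': "x \<noteq> 0" using nx1 by auto
      have "norm x \<le> norm x * norm x" using nx1 mult_left_mono[OF nx1, of "norm x"] by simp
      then have "S \<le> x \<bullet> x" using nx unfolding \<rho>_def
        by (simp add: power2_norm_eq_inner[symmetric] power2_eq_square)
      then have Sx: "Hd (x\<bullet>x) + (x\<bullet>x) * Hdd (x\<bullet>x) < 0" "Hd (x\<bullet>x) * (x\<bullet>x) * ln (x\<bullet>x) \<le> H (x\<bullet>x)"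
        using S by auto
      have h1: "Hd (x\<bullet>x) > 0" using H1pos by simp
      have ct: "c x a * (v x + 2*\<epsilon>*Hd (x\<bullet>x)*((norm x)\<^sup>2 * ln (norm x))) \<le> 0" for a
        using m0
      proof
        assume "\<forall>x \<alpha>. c x \<alpha> = 0" then show ?thesis by simp
      next
        assume m0: "m \<le> 0"
        have "x \<bullet> x = (norm x)\<^sup>2" by (simp add: power2_norm_eq_inner)
        then have eq: "Hd (x\<bullet>x) * (x\<bullet>x) * ln (x\<bullet>x) = 2 * Hd (x\<bullet>x) * ((norm x)\<^sup>2 * ln (norm x))"
          using ln_norm_sq[OF x0'] by simp
        have "2 * Hd (x\<bullet>x) * ((norm x)\<^sup>2 * ln (norm x)) \<le> H (x\<bullet>x)"
          using Sx(2) unfolding eq .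
        then have "\<epsilon> * (2 * Hd (x\<bullet>x) * ((norm x)\<^sup>2 * ln (norm x))) \<le> \<epsilon> * H (x\<bullet>x)"
          using ep by (intro mult_left_mono) auto
        then have "2*\<epsilon>*Hd (x\<bullet>x)*((norm x)\<^sup>2 * ln (norm x)) \<le> \<epsilon> * H (x\<bullet>x)"
          by (simp add: ac_simps)
        moreover have "v x < m - \<epsilon> * H (x \<bullet> x)" using vx unfolding psi_def .
        ultimately have "v x + 2*\<epsilon>*Hd (x\<bullet>x)*((norm x)\<^sup>2 * ln (norm x)) \<le> 0" using m0 by linarith
        then show ?thesis using c_nonneg[of x a] by (simp add: mult_nonneg_nonpos)
      qed
      show "F x (v x) (Dpsi x) (Hpsi x) < 0"
        unfolding Dpsi_def Hpsi_def
        by (rule log_strict[where F=F and b=b and c=c and lam=lam and Lam=Lam and x=x and \<epsilon>=\<epsilon>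
              and hA="Hd (x\<bullet>x)" and hB="Hdd (x\<bullet>x)" and t="v x", OF unif_ell lam F_sup bx[OF nx] x0' ep h1 Sx(1) ct])
    qed
    then show ?thesis unfolding psi_def .
  qed
  have ge: "m \<le> v x0" for x0
  proof (cases "norm x0 \<le> \<rho>")
    case True then show ?thesis by (rule inball)
  next
    case False
    then have x0: "norm x0 \<ge> \<rho>" by simp
    define h where "h = H (x0 \<bullet> x0)"
    have h0: "h \<ge> 0" unfolding h_def using Hpos by simp
    show ?thesis
    proof (rule ccontr)
      assume "\<not> m \<le> v x0"
      then have d: "m - v x0 > 0" by simp
      define \<epsilon> where "\<epsilon> = (m - v x0) / (h + 1)"
      have ep: "\<epsilon> > 0" unfolding \<epsilon>_def using d h0 by simp
      have "\<epsilon> * h < m - v x0"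
      proof -
        have "\<epsilon> * h = (m - v x0) * (h / (h+1))" unfolding \<epsilon>_def by simp
        also have "\<dots> < (m - v x0) * 1" using d h0 by (intro mult_strict_left_mono) auto
        finally show ?thesis by simp
      qed
      then show False using key[OF ep x0] unfolding h_def by simp
    qed
  qed
  then show ?thesis unfolding m_def by blast
qed


definition HH :: "real \<Rightarrow> real" where
  "HH s = (ln(exp 1 + s) + ln(ln(exp 1 + s)))/2"
definition HH1 :: "real \<Rightarrow> real" where
  "HH1 s = (1 + 1/ln(exp 1 + s))/(2*(exp 1 + s))"
definition HH2 :: "real \<Rightarrow> real" where
  "HH2 s = -(1 + 1/ln(exp 1 + s) + 1/(ln(exp 1 + s))\<^sup>2)/(2*(exp 1 + s)\<^sup>2)"

lemma HH_ev1: "eventually (\<lambda>s::real. (1 + 1/ln(exp 1 + s))/(2*(exp 1 + s)) + s * (-(1 + 1/ln(exp 1 + s) + 1/(ln(exp 1 + s))\<^sup>2)/(2*(exp 1 + s)\<^sup>2)) < 0) at_top"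
  by real_asymp

lemma HH_ev2: "eventually (\<lambda>s::real. (1 + 1/ln(exp 1 + s))/(2*(exp 1 + s)) * s * ln s \<le> (ln(exp 1 + s) + ln(ln(exp 1 + s)))/2) at_top"
  by real_asymp

lemma HH_S: "\<exists>S. \<forall>s\<ge>S. HH1 s + s * HH2 s < 0 \<and> HH1 s * s * ln s \<le> HH s"
proof -
  have "eventually (\<lambda>s. HH1 s + s * HH2 s < 0 \<and> HH1 s * s * ln s \<le> HH s) at_top"
    using eventually_conj[OF HH_ev1 HH_ev2] unfolding HH_def HH1_def HH2_def .
  then show ?thesis unfolding eventually_at_top_linorder by blast
qed

lemma lnE: "(s::real) \<ge> 0 \<Longrightarrow> ln (exp 1 + s) \<ge> 1"
proof -
  assume "s \<ge> 0"
  then have "exp 1 \<le> exp 1 + s" by linarith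
  then have "ln (exp 1) \<le> ln (exp 1 + s)" using ln_le_cancel_iff[of "exp 1" "exp 1 + s"] exp_gt_zero[of 1] by linarith
  then show ?thesis by simp
qed

lemma eq1: "(y::real) > 0 \<Longrightarrow> L > 0 \<Longrightarrow> (1/y + 1/L * (1/y))/2 = (1 + 1/L)/(2*y)"
  by (simp add: field_simps)

lemma eq2: "(y::real) > 0 \<Longrightarrow> L > 0 \<Longrightarrow>
  ((0 + (0 * L - 1 * (1/y)) / (L * L)) * (2*y) - (1 + 1/L) * 2) / ((2*y) * (2*y))
   = -(1 + 1/L + 1/L\<^sup>2)/(2*y\<^sup>2)"
  by (simp add: field_simps power2_eq_square)

lemma HH_derivs:
  fixes s :: real
  assumes p: "exp 1 + s > 0" and l0: "ln (exp 1 + s) > 0"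
  shows "((\<lambda>s. (ln(exp 1 + s) + ln(ln(exp 1 + s)))/2) has_real_derivative (1 + 1/ln(exp 1 + s))/(2*(exp 1 + s))) (at s)"
    "((\<lambda>s. (1 + 1/ln(exp 1 + s))/(2*(exp 1 + s))) has_real_derivative -(1 + 1/ln(exp 1 + s) + 1/(ln(exp 1 + s))\<^sup>2)/(2*(exp 1 + s)\<^sup>2)) (at s)"
proof -
  have d1: "((\<lambda>s. ln(exp 1 + s)) has_real_derivative 1/(exp 1 + s)) (at s)"
    using p by (auto intro!: derivative_eq_intros simp: divide_inverse)
  have d2: "((\<lambda>s. ln(ln(exp 1 + s))) has_real_derivative 1/ln(exp 1 + s) * (1/(exp 1 + s))) (at s)"
    by (rule DERIV_chain2[OF DERIV_ln_divide[OF l0] d1])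
  have "((\<lambda>s. (ln(exp 1 + s) + ln(ln(exp 1 + s)))/2) has_real_derivative (1/(exp 1 + s) + 1/ln(exp 1 + s) * (1/(exp 1 + s)))/2) (at s)"
    by (rule DERIV_cdivide[OF DERIV_add[OF d1 d2]])
  then show "((\<lambda>s. (ln(exp 1 + s) + ln(ln(exp 1 + s)))/2) has_real_derivative (1 + 1/ln(exp 1 + s))/(2*(exp 1 + s))) (at s)"
    unfolding eq1[OF p l0] .
  have d3: "((\<lambda>s. 1/ln(exp 1 + s)) has_real_derivative (0 * ln(exp 1 + s) - 1 * (1/(exp 1 + s))) / (ln(exp 1 + s) * ln(exp 1 + s))) (at s)"
    by (rule DERIV_divide[OF DERIV_const d1]) (use l0 in simp)
  have d4: "((\<lambda>s. 1 + 1/ln(exp 1 + s)) has_real_derivative 0 + (0 * ln(exp 1 + s) - 1 * (1/(exp 1 + s))) / (ln(exp 1 + s) * ln(exp 1 + s))) (at s)"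
    by (rule DERIV_add[OF DERIV_const d3])
  have d5: "((\<lambda>s. 2*(exp 1 + s)) has_real_derivative 2) (at s)"
    by (auto intro!: derivative_eq_intros)
  have "((\<lambda>s. (1 + 1/ln(exp 1 + s))/(2*(exp 1 + s))) has_real_derivative
     ((0 + (0 * ln(exp 1 + s) - 1 * (1/(exp 1 + s))) / (ln(exp 1 + s) * ln(exp 1 + s))) * (2*(exp 1 + s)) - (1 + 1/ln(exp 1 + s)) * 2) / ((2*(exp 1 + s)) * (2*(exp 1 + s)))) (at s)"
    by (rule DERIV_divide[OF d4 d5]) (use p in simp)
  then show "((\<lambda>s. (1 + 1/ln(exp 1 + s))/(2*(exp 1 + s))) has_real_derivative -(1 + 1/ln(exp 1 + s) + 1/(ln(exp 1 + s))\<^sup>2)/(2*(exp 1 + s)\<^sup>2)) (at s)"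
    unfolding eq2[OF p l0] .
qed

lemma HH_pl: "(s::real) \<ge> 0 \<Longrightarrow> exp 1 + s > 0 \<and> ln (exp 1 + s) > 0"
  using lnE[of s] by (smt (verit) exp_gt_zero)

lemma HH_d: "s \<ge> 0 \<Longrightarrow> (HH has_real_derivative HH1 s) (at s)"
  using HH_derivs(1)[of s] HH_pl[of s] unfolding HH_def[abs_def] HH1_def by blast

lemma HH1_d: "s \<ge> 0 \<Longrightarrow> (HH1 has_real_derivative HH2 s) (at s)"
  using HH_derivs(2)[of s] HH_pl[of s] unfolding HH1_def[abs_def] HH2_def by blast

lemma HH_gt1: "(s::real) \<ge> 0 \<Longrightarrow> exp 1 + s > 1"
  by (smt (verit) one_less_exp_iff)

lemma HH2_c: "continuous_on {0..} HH2"
  unfolding HH2_def[abs_def]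
  by (intro continuous_intros; auto dest!: HH_gt1)

lemma HH1_pos: "s \<ge> 0 \<Longrightarrow> HH1 s > 0"
  using lnE[of s] unfolding HH1_def by (smt (verit) divide_pos_pos exp_gt_zero)

lemma HH_pos: "s \<ge> 0 \<Longrightarrow> HH s \<ge> 0"
  using lnE[of s] unfolding HH_def by simp

lemma HH_log: "s \<ge> 1 \<Longrightarrow> ln s / 2 \<le> HH s"
proof -
  assume s: "s \<ge> 1"
  have "ln s \<le> ln (exp 1 + s)" using s HH_gt1[of s] by (subst ln_le_cancel_iff) auto
  moreover have "ln (ln (exp 1 + s)) \<ge> 0" using lnE[of s] s by simp
  ultimately show ?thesis unfolding HH_def by simp
qed


theorem corollary3p2:
  fixes F :: "real^'n \<Rightarrow> real \<Rightarrow> real^'n \<Rightarrow> real^'n^'n \<Rightarrow> real"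
    and b :: "real^'n \<Rightarrow> 'a::metric_space \<Rightarrow> real^'n"
    and c :: "real^'n \<Rightarrow> 'a \<Rightarrow> real"
    and v :: "real^'n \<Rightarrow> real"
    and lam Lam :: real
  assumes F_cont: "continuous_on {(((x, t), p), X). symmetric_mat X}
                     (\<lambda>(((x, t), p), X). F x t p X)"
    and lam_pos: "0 < lam" and lam_le: "lam \<le> Lam"
    and unif_ell: "\<And>x t p X Q. symmetric_mat X \<Longrightarrow> symmetric_mat Q \<Longrightarrow> psd_mat Q \<Longrightarrow>
           lam * trace Q \<le> F x t p X - F x t p (X + Q) \<and>
           F x t p X - F x t p (X + Q) \<le> Lam * trace Q"
    and b_cont: "continuous_on UNIV (\<lambda>(x, \<alpha>). b x \<alpha>)"
    and c_cont: "continuous_on UNIV (\<lambda>(x, \<alpha>). c x \<alpha>)"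
    and bc_bound: "\<And>R. R > 0 \<Longrightarrow> \<exists>K. (\<forall>x \<alpha>. norm x \<le> R \<longrightarrow> norm (b x \<alpha>) + \<bar>c x \<alpha>\<bar> \<le> K) \<and>
           (\<forall>x y \<alpha>. norm x \<le> R \<longrightarrow> norm y \<le> R \<longrightarrow> norm (b x \<alpha> - b y \<alpha>) \<le> K * norm (x - y))"
    and c_nonneg: "\<And>x \<alpha>. c x \<alpha> \<ge> 0"
    and c_unif: "\<And>R e. R > 0 \<Longrightarrow> e > 0 \<Longrightarrow> \<exists>d>0. \<forall>x y \<alpha>. norm x \<le> R \<longrightarrow> norm y \<le> R \<longrightarrow>
           dist x y < d \<longrightarrow> \<bar>c x \<alpha> - c y \<alpha>\<bar> < e"
    and Ro: "\<exists>Ro>0. \<forall>x. norm x \<ge> Ro \<longrightarrow>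
           (SUP \<alpha>. b x \<alpha> \<bullet> x - c x \<alpha> * (norm x)\<^sup>2 * ln (norm x))
             \<le> lam - (real CARD('n) - 1) * Lam"
    and F_sup: "\<And>x t p. F x t p 0 \<le> (SUP \<alpha>. c x \<alpha> * t - b x \<alpha> \<bullet> p)"
    and super: "visc_supersolution F v"
    and growth: "Liminf at_infinity (\<lambda>x. ereal (v x / ln (norm x))) \<ge> 0"
    and alt: "(\<forall>x \<alpha>. c x \<alpha> = 0) \<or> (\<forall>x. v x \<le> 0)"
  shows "\<exists>k. \<forall>x. v x = k"
  proof -
  have Lam: "Lam \<ge> 0" using lam_pos lam_le by simp
  obtain S where S: "\<And>s. s \<ge> S \<Longrightarrow> HH1 s + s * HH2 s < 0 \<and> HH1 s * s * ln s \<le> HH s"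
    using HH_S by blast
  obtain z where z: "\<And>x. v z \<le> v x"
    using attains_min[where F=F and b=b and c=c and v=v and lam=lam and Lam=Lam and H=HH and Hd=HH1 and Hdd=HH2,
        OF unif_ell lam_pos F_sup bc_bound c_nonneg Ro super growth alt HH_d HH1_d HH2_c HH1_pos HH_pos HH_log S]
    by blast
  have hc: "\<And>x a. c x a * v x \<le> 0"
    using alt c_nonneg by (metis mult_eq_0_iff mult_nonneg_nonpos order_refl)
  have "\<And>x. v x = v z"
    by (rule strong_min[where F=F and b=b and c=c and v=v and lam=lam and Lam=Lam,
        OF unif_ell lam_pos Lam F_sup bc_bound hc super z])
  then show ?thesis by blast
qed

end
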